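(* Let $X$ be a batch of $S(H)$ and $(v,w)$ an edge of $H$ with $e(v,w)$ occurring in $X$; let $(v,y)$ be the edge that cyclicly precedes $(v,w)$. If $e(v,w)$ is immediately preceded in $X$ by $e(v,y)$, then the segment of $X$ occupied by $e(v,w)$ is exactly one phrase of the LZ77 parsing of $X$; if $e(v,w)$ is immediately preceded by $s(v)$, it is the union of exactly two phrases; in every other case (including when $e(v,w)$ is the first string of $X$), it is the union of at least two phrases.
   Context: $H$ is a directed graph without loops in which no vertex has outdegree exactly 1. For each vertex $v$ introduce three symbols $v$, $v'$, $\$_v$; all these symbols are pairwise distinct (over all vertices). For a vertex $v$ with outdegree $d=d(v)\ge 1$, let $w_0,\dots,w_{d-1}$ be its out-neighbors in a fixed cyclic order (indices mod $d$); the edge $(v,w_{i-1})$ cyclicly precedes $(v,w_i)$. Define $e(v,w_i)=(v'w_{i-1})^4v'w_i$ for $0\le i<d$ and $s(v)=v^4(v')^5\$_v$. $S(H)$ is the set of all strings $s(v)$ ($v$ a vertex) and $e(v,w)$ ($(v,w)$ an edge). A batch is a sequence of distinct elements of $S(H)$, identified with their concatenation; a schedule is a partition of $S(H)$ into batches. LZ77 parsing of a string $z$: $z=z_1z_2\cdots z_t$ where, once $z_1,\dots,z_{i-1}$ are determined and the remaining suffix is nonempty, $z_i$ is the longest nonempty prefix $u$ of the remaining suffix such that $u^-$ ($u$ with its last symbol deleted) has an occurrence in $z$ starting at a position strictly smaller than the starting position of $u$ (the empty string always qualifies). The $z_i$ are the phrases; $|\mathcal C(z)|=t$ is the number of phrases.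 *)

theory Defs
  imports Main
begin

text \<open>Symbols: for each vertex v the three pairwise distinct symbols v, v' and $_v.\<close>
datatype 'v sym = Sym 'v | Prime 'v | Dollar 'v

definition out_nbrs :: "('v \<times> 'v) set \<Rightarrow> 'v \<Rightarrow> 'v set" where
  "out_nbrs E v = {w. (v, w) \<in> E}"

definition valid_graph :: "'v set \<Rightarrow> ('v \<times> 'v) set \<Rightarrow> ('v \<Rightarrow> 'v list) \<Rightarrow> bool" where
  "valid_graph V E cord \<longleftrightarrow>
     finite V \<and> E \<subseteq> V \<times> V \<and> (\<forall>v. (v, v) \<notin> E) \<and>
     (\<forall>v\<in>V. card (out_nbrs E v) \<noteq> 1) \<and>
     (\<forall>v\<in>V. distinct (cord v) \<and> set (cord v) = out_nbrs E v)"

definition cpred :: "('v \<Rightarrow> 'v list) \<Rightarrow> 'v \<Rightarrow> 'v \<Rightarrow> 'v" where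
  "cpred cord v w = (let L = cord v; d = length L; i = (THE i. i < d \<and> L ! i = w) in L ! ((i + d - 1) mod d))"

definition estr :: "('v \<Rightarrow> 'v list) \<Rightarrow> 'v \<Rightarrow> 'v \<Rightarrow> 'v sym list" where
  "estr cord v w = concat (replicate 4 [Prime v, Sym (cpred cord v w)]) @ [Prime v, Sym w]"

definition sstr :: "'v \<Rightarrow> 'v sym list" where
  "sstr v = replicate 4 (Sym v) @ replicate 5 (Prime v) @ [Dollar v]"

definition SH :: "'v set \<Rightarrow> ('v \<times> 'v) set \<Rightarrow> ('v \<Rightarrow> 'v list) \<Rightarrow> 'v sym list set" where
  "SH V E cord = sstr ` V \<union> (\<lambda>(v, w). estr cord v w) ` E"

definition is_batch :: "'v set \<Rightarrow> ('v \<times> 'v) set \<Rightarrow> ('v \<Rightarrow> 'v list) \<Rightarrow> 'v sym list list \<Rightarrow> bool" where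
  "is_batch V E cord xs \<longleftrightarrow> distinct xs \<and> set xs \<subseteq> SH V E cord"

definition prev_occ :: "'a list \<Rightarrow> nat \<Rightarrow> nat \<Rightarrow> bool" where
  "prev_occ z i m \<longleftrightarrow> m = 0 \<or>
     (\<exists>j<i. j + m \<le> length z \<and> take m (drop j z) = take m (drop i z))"

definition lz_len :: "'a list \<Rightarrow> nat \<Rightarrow> nat" where
  "lz_len z i = (GREATEST l. 1 \<le> l \<and> i + l \<le> length z \<and> prev_occ z i (l - 1))"

inductive lz_boundary :: "'a list \<Rightarrow> nat \<Rightarrow> bool" for z where
  start: "lz_boundary z 0"
| step: "lz_boundary z i \<Longrightarrow> i < length z \<Longrightarrow> lz_boundary z (i + lz_len z i)"

definition union_of_phrases :: "'a list \<Rightarrow> nat \<Rightarrow> nat \<Rightarrow> nat \<Rightarrow> bool" where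
  "union_of_phrases z a b n \<longleftrightarrow> lz_boundary z a \<and> lz_boundary z b \<and>
     card {i. lz_boundary z i \<and> a \<le> i \<and> i < b} = n"

end

theory Submission imports Defs begin

lemma prev_occ_mono:
  assumes "prev_occ z i m" "m' \<le> m" shows "prev_occ z i m'"
proof -
  { assume "m' \<noteq> 0"
    then have "m \<noteq> 0" using assms(2) by auto
    then obtain j where j: "j < i" "j + m \<le> length z" "take m (drop j z) = take m (drop i z)"
      using assms(1) unfolding prev_occ_def by auto
    have "take m' (take m (drop j z)) = take m' (take m (drop i z))" using j(3) by simp
    then have "take m' (drop j z) = take m' (drop i z)" using assms(2) by (simp add: min_def)
    then have ?thesis using j assms(2) unfolding prev_occ_def by auto }
  then show ?thesis unfolding prev_occ_def by auto
qed

lemma prev_occI: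
  assumes "j < i" "j + m \<le> length z" "i + m \<le> length z" "\<forall>r<m. z ! (j + r) = z ! (i + r)"
  shows "prev_occ z i m"
proof -
  have "take m (drop j z) = take m (drop i z)"
    by (rule nth_equalityI) (use assms in auto)
  then show ?thesis using assms unfolding prev_occ_def by auto
qed

lemma prev_occD:
  assumes "prev_occ z i m" "0 < m"
  shows "\<exists>j<i. j + m \<le> length z \<and> i + m \<le> length z \<and> (\<forall>r<m. z ! (j + r) = z ! (i + r))"
proof -
  obtain j where j: "j < i" "j + m \<le> length z" "take m (drop j z) = take m (drop i z)"
    using assms unfolding prev_occ_def by auto
  have l: "i + m \<le> length z"
  proof (rule ccontr)
    assume "\<not> ?thesis"
    then have "length z - i < m" using assms(2) by linarith
    then have "length (take m (drop i z)) < m" by simp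
    moreover have "length (take m (drop j z)) = m" using j(2) by auto
    ultimately show False using j(3) by simp
  qed
  have "\<forall>r<m. z ! (j + r) = z ! (i + r)"
  proof (intro allI impI)
    fix r assume r: "r < m"
    have "take m (drop j z) ! r = take m (drop i z) ! r" using j(3) by simp
    then show "z ! (j + r) = z ! (i + r)" using r j(2) l by simp
  qed
  then show ?thesis using j l by blast
qed

lemma lz_len_props:
  assumes "i < length z"
  shows "1 \<le> lz_len z i \<and> i + lz_len z i \<le> length z \<and> prev_occ z i (lz_len z i - 1)"
proof -
  let ?P = "\<lambda>l. 1 \<le> l \<and> i + l \<le> length z \<and> prev_occ z i (l - 1)"
  have "?P 1" using assms unfolding prev_occ_def by auto
  then have "?P (Greatest ?P)" by (rule GreatestI_nat[where b="length z"]) auto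
  then show ?thesis unfolding lz_len_def .
qed

lemma lz_len_ge:
  assumes "i + L \<le> length z" "1 \<le> L" "prev_occ z i (L - 1)"
  shows "L \<le> lz_len z i"
  unfolding lz_len_def by (rule Greatest_le_nat[where b="length z"]) (use assms in auto)

lemma lz_len_le:
  assumes "i < length z" "\<not> prev_occ z i L"
  shows "lz_len z i \<le> L"
proof (rule ccontr)
  assume "\<not> ?thesis"
  then have "L \<le> lz_len z i - 1" by auto
  then have "prev_occ z i L" using lz_len_props[OF assms(1)] prev_occ_mono by blast
  then show False using assms(2) by simp
qed

fun lzf :: "'a list \<Rightarrow> nat \<Rightarrow> nat" where
  "lzf z 0 = 0"
| "lzf z (Suc m) = (if lzf z m < length z then lzf z m + lz_len z (lzf z m) else lzf z m)"

lemma lzf_boundary: "lz_boundary z (lzf z m)"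
  by (induction m) (auto intro: lz_boundary.intros)

lemma boundary_lzf: "lz_boundary z i \<Longrightarrow> \<exists>m. i = lzf z m"
proof (induction rule: lz_boundary.induct)
  case start
  then show ?case by (metis lzf.simps(1))
next
  case (step i)
  then obtain m where "i = lzf z m" by auto
  then show ?case using step by (metis lzf.simps(2))
qed

lemma lzf_mono: "m \<le> m' \<Longrightarrow> lzf z m \<le> lzf z m'"
  by (rule lift_Suc_mono_le[of "lzf z"]) auto

lemma lzf_ge: "min m (length z) \<le> lzf z m"
proof (induction m)
  case 0 then show ?case by simp
next
  case (Suc m)
  show ?case
  proof (cases "lzf z m < length z")
    case True
    then show ?thesis using Suc lz_len_props[OF True] by auto
  next
    case False
    then show ?thesis by auto
  qed
qed

lemma boundary_gap:
  assumes "lz_boundary z p" "p < length z" "lz_boundary z i" "p < i"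
  shows "p + lz_len z p \<le> i"
proof -
  obtain m where m: "p = lzf z m" using boundary_lzf[OF assms(1)] by auto
  obtain m' where m': "i = lzf z m'" using boundary_lzf[OF assms(3)] by auto
  have "\<not> m' \<le> m" using lzf_mono[of m' m z] m m' assms(4) by auto
  then have "Suc m \<le> m'" by simp
  then have "lzf z (Suc m) \<le> lzf z m'" by (rule lzf_mono)
  then show ?thesis using m m' assms(2) by simp
qed

lemma boundary_cover:
  assumes "r < length z"
  shows "\<exists>p. lz_boundary z p \<and> p \<le> r \<and> r < p + lz_len z p"
proof -
  have ex: "\<exists>m. r < lzf z m" using lzf_ge[of "Suc r" z] assms by (intro exI[of _ "Suc r"]) auto
  define m0 where "m0 = (LEAST m. r < lzf z m)"
  have m0: "r < lzf z m0" unfolding m0_def using LeastI_ex[OF ex] .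
  have "m0 \<noteq> 0" using m0 by (metis lzf.simps(1) not_less0)
  then obtain m1 where m1: "m0 = Suc m1" by (cases m0) auto
  have "\<not> r < lzf z m1" using not_less_Least[of m1 "\<lambda>m. r < lzf z m"] m1 unfolding m0_def by auto
  then have le: "lzf z m1 \<le> r" by auto
  then have "lzf z m1 < length z" using assms by auto
  then have "lzf z m0 = lzf z m1 + lz_len z (lzf z m1)" using m1 by simp
  then show ?thesis using le m0 lzf_boundary by metis
qed

lemma boundary_end:
  assumes "r < length z"
    and "\<And>p. lz_boundary z p \<Longrightarrow> p \<le> r \<Longrightarrow> r < p + lz_len z p \<Longrightarrow> p + lz_len z p = a"
  shows "lz_boundary z a"
proof -
  obtain p where p: "lz_boundary z p" "p \<le> r" "r < p + lz_len z p" using boundary_cover[OF assms(1)] by auto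
  have "lz_boundary z (p + lz_len z p)" using p assms(1) by (intro lz_boundary.step) auto
  then show ?thesis using assms(2)[OF p] by simp
qed


lemma sstr_nth: "q < 10 \<Longrightarrow> sstr u ! q = (if q < 4 then Sym u else if q < 9 then Prime u else Dollar u)"
proof -
  assume "q < 10"
  then have "q \<in> {0,1,2,3,4,5,6,7,8,9}" by auto
  then show ?thesis unfolding sstr_def by (auto simp: numeral_eq_Suc)
qed

lemma estr_nth: "q < 10 \<Longrightarrow> estr cord u w ! q =
   (if even q then Prime u else if q = 9 then Sym w else Sym (cpred cord u w))"
proof -
  assume "q < 10"
  then have "q \<in> {0,1,2,3,4,5,6,7,8,9}" by auto
  moreover have "estr cord u w = [Prime u, Sym (cpred cord u w), Prime u, Sym (cpred cord u w),
    Prime u, Sym (cpred cord u w), Prime u, Sym (cpred cord u w), Prime u, Sym w]"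
    unfolding estr_def by (simp add: numeral_eq_Suc)
  ultimately show ?thesis by auto
qed

lemma len_sstr[simp]: "length (sstr u) = 10" unfolding sstr_def by simp
lemma len_estr[simp]: "length (estr cord u w) = 10" unfolding estr_def by (simp add: numeral_eq_Suc)

lemma concat10_len: "\<forall>x\<in>set xs. length x = 10 \<Longrightarrow> length (concat xs) = 10 * length xs"
  by (induction xs) auto

lemma concat10_take: "\<forall>x\<in>set xs. length x = 10 \<Longrightarrow> k \<le> length xs \<Longrightarrow> length (concat (take k xs)) = 10 * k"
  using concat10_len[of "take k xs"] by (auto dest: in_set_takeD)

lemma concat10_nth: "\<forall>x\<in>set xs. length x = 10 \<Longrightarrow> i < length xs \<Longrightarrow> q < 10 \<Longrightarrow>
   concat xs ! (10 * i + q) = xs ! i ! q"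
proof (induction xs arbitrary: i)
  case Nil then show ?case by simp
next
  case (Cons x xs)
  show ?case
  proof (cases i)
    case 0 then show ?thesis using Cons by (simp add: nth_append)
  next
    case (Suc i')
    have "concat (x # xs) ! (10 * i + q) = concat xs ! (10 * i' + q)"
      using Cons.prems Suc by (simp add: nth_append)
    then show ?thesis using Cons Suc by simp
  qed
qed

context
  fixes V E cord
  assumes vg: "valid_graph V E cord"
begin

lemma cp_facts:
  assumes "(u, w) \<in> E"
  shows "2 \<le> length (cord u)" "distinct (cord u)" "set (cord u) = out_nbrs E u"
    "w \<in> set (cord u)"
    "\<exists>i<length (cord u). cord u ! i = w \<and>
       cpred cord u w = cord u ! (if i = 0 then length (cord u) - 1 else i - 1)"
proof -
  have uV: "u \<in> V" using vg assms unfolding valid_graph_def by auto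
  show d: "distinct (cord u)" and s: "set (cord u) = out_nbrs E u"
    using vg uV unfolding valid_graph_def by auto
  show w: "w \<in> set (cord u)" using s assms unfolding out_nbrs_def by auto
  have "card (out_nbrs E u) \<noteq> 1" using vg uV unfolding valid_graph_def by auto
  then have "length (cord u) \<noteq> 1" using s d distinct_card by metis
  moreover have "length (cord u) \<noteq> 0" using w by auto
  ultimately show "2 \<le> length (cord u)" by linarith
  let ?L = "cord u" let ?d = "length (cord u)"
  obtain i where i: "i < ?d" "?L ! i = w" using w by (auto simp: in_set_conv_nth)
  have the: "(THE i. i < ?d \<and> ?L ! i = w) = i"
    by (rule the_equality) (use i d nth_eq_iff_index_eq in auto)
  have "(i + ?d - 1) mod ?d = (if i = 0 then ?d - 1 else i - 1)"
  proof (cases "i = 0")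
    case True then show ?thesis using i by simp
  next
    case False
    then have "i + ?d - 1 = (i - 1) + ?d" by simp
    then have "(i + ?d - 1) mod ?d = (i - 1) mod ?d" by simp
    then show ?thesis using False i by simp
  qed
  then have "cpred cord u w = ?L ! (if i = 0 then ?d - 1 else i - 1)"
    unfolding cpred_def Let_def the by simp
  then show "\<exists>i<?d. ?L ! i = w \<and> cpred cord u w = ?L ! (if i = 0 then ?d - 1 else i - 1)"
    using i by blast
qed

lemma cp_in: "(u, w) \<in> E \<Longrightarrow> (u, cpred cord u w) \<in> E"
proof -
  assume a: "(u, w) \<in> E"
  obtain i where i: "i < length (cord u)" "cpred cord u w = cord u ! (if i = 0 then length (cord u) - 1 else i - 1)"
    using cp_facts(5)[OF a] by auto
  have "cpred cord u w \<in> set (cord u)" using i cp_facts(1)[OF a] by (auto simp: nth_mem)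
  then show ?thesis using cp_facts(3)[OF a] unfolding out_nbrs_def by auto
qed

lemma cp_ne: "(u, w) \<in> E \<Longrightarrow> cpred cord u w \<noteq> w"
proof -
  assume a: "(u, w) \<in> E"
  obtain i where i: "i < length (cord u)" "cord u ! i = w" "cpred cord u w = cord u ! (if i = 0 then length (cord u) - 1 else i - 1)"
    using cp_facts(5)[OF a] by auto
  have d: "distinct (cord u)" "2 \<le> length (cord u)" using cp_facts[OF a] by auto
  have "(if i = 0 then length (cord u) - 1 else i - 1) \<noteq> i" using d(2) by auto
  moreover have "(if i = 0 then length (cord u) - 1 else i - 1) < length (cord u)" using i(1) by auto
  ultimately show ?thesis using i d nth_eq_iff_index_eq by metis
qed

lemma cp_inj: "(u, w1) \<in> E \<Longrightarrow> (u, w2) \<in> E \<Longrightarrow> cpred cord u w1 = cpred cord u w2 \<Longrightarrow> w1 = w2"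
proof -
  assume a1: "(u, w1) \<in> E" and a2: "(u, w2) \<in> E" and eq: "cpred cord u w1 = cpred cord u w2"
  obtain i1 where i1: "i1 < length (cord u)" "cord u ! i1 = w1" "cpred cord u w1 = cord u ! (if i1 = 0 then length (cord u) - 1 else i1 - 1)"
    using cp_facts(5)[OF a1] by auto
  obtain i2 where i2: "i2 < length (cord u)" "cord u ! i2 = w2" "cpred cord u w2 = cord u ! (if i2 = 0 then length (cord u) - 1 else i2 - 1)"
    using cp_facts(5)[OF a2] by auto
  have d: "distinct (cord u)" "2 \<le> length (cord u)" using cp_facts[OF a1] by auto
  have "(if i1 = 0 then length (cord u) - 1 else i1 - 1) = (if i2 = 0 then length (cord u) - 1 else i2 - 1)"
    using eq i1 i2 d nth_eq_iff_index_eq[of "cord u"] by (smt (verit) diff_less less_imp_diff_less zero_less_one)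
  then have "i1 = i2" using i1(1) i2(1) d(2) by (auto split: if_splits)
  then show ?thesis using i1 i2 by simp
qed

end


locale batch =
  fixes V :: "'v set" and E :: "('v \<times> 'v) set" and cord :: "'v \<Rightarrow> 'v list" and xs :: "'v sym list list"
  assumes vg: "valid_graph V E cord" and ib: "is_batch V E cord xs"
begin

lemma SH_cases: "x \<in> set xs \<Longrightarrow> (\<exists>u. x = sstr u) \<or> (\<exists>u w. (u, w) \<in> E \<and> x = estr cord u w)"
proof -
  assume "x \<in> set xs"
  then have "x \<in> SH V E cord" using ib unfolding is_batch_def by auto
  then consider (a) "x \<in> sstr ` V" | (b) "x \<in> (\<lambda>(v, w). estr cord v w) ` E"
    unfolding SH_def by blast
  then show ?thesis
  proof cases
    case a then show ?thesis by blast
  next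
    case b
    then obtain p where "p \<in> E" "x = (\<lambda>(v, w). estr cord v w) p" by blast
    then show ?thesis by (cases p) auto
  qed
qed

lemma len10: "\<forall>x\<in>set xs. length x = 10"
  using SH_cases by fastforce

lemma lenz: "length (concat xs) = 10 * length xs"
  using concat10_len[OF len10] .

lemma zat: "i < length xs \<Longrightarrow> q < 10 \<Longrightarrow> concat xs ! (10 * i + q) = xs ! i ! q"
  using concat10_nth[OF len10] .

lemma locate: "t < length (concat xs) \<Longrightarrow> \<exists>i q. i < length xs \<and> q < 10 \<and> t = 10 * i + q"
  using lenz by (intro exI[of _ "t div 10"] exI[of _ "t mod 10"]) auto

lemma xs_inj: "i < length xs \<Longrightarrow> j < length xs \<Longrightarrow> xs ! i = xs ! j \<Longrightarrow> i = j"
  using ib nth_eq_iff_index_eq unfolding is_batch_def by metis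

lemma per:
  assumes "k < length xs" "xs ! k = estr cord u x" "10 * k \<le> t" "t \<le> 10 * k + 8"
  shows "concat xs ! t = (if even t then Prime u else Sym (cpred cord u x))"
proof -
  have t: "t = 10 * k + (t - 10 * k)" using assms by simp
  have "t - 10 * k \<noteq> 9" using assms by linarith
  have "concat xs ! t = estr cord u x ! (t - 10 * k)"
    using zat[OF assms(1), of "t - 10 * k"] assms t by simp
  also have "\<dots> = (if even (t - 10 * k) then Prime u else Sym (cpred cord u x))"
    using estr_nth[of "t - 10 * k" cord u x] assms \<open>t - 10 * k \<noteq> 9\<close> by (simp add: even_diff_nat)
  also have "even (t - 10 * k) \<longleftrightarrow> even t" using assms(3) by (simp add: even_diff_nat)
  finally show ?thesis .
qed

lemma last9:
  assumes "k < length xs" "xs ! k = estr cord u x"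
  shows "concat xs ! (10 * k + 9) = Sym x"
  using zat[OF assms(1), of 9] assms estr_nth[of 9] by simp

lemma triple:
  assumes "k < length xs" "xs ! k = estr cord v w" "(v, w) \<in> E" "t + 2 < length (concat xs)"
    "concat xs ! t = Sym (cpred cord v w)" "concat xs ! (t + 1) = Prime v"
    "concat xs ! (t + 2) = Sym (cpred cord v w)"
  shows "t + 1 = 10 * k \<or> t + 1 = 10 * k + 2 \<or> t + 1 = 10 * k + 4 \<or> t + 1 = 10 * k + 6"
proof -
  obtain i q where iq: "i < length xs" "q < 10" "t + 1 = 10 * i + q" using locate[of "t + 1"] assms(4) by auto
  have xi: "xs ! i \<in> set xs" using iq by simp
  have z1: "concat xs ! (t + 1) = xs ! i ! q" using zat iq by simp
  show ?thesis
  proof (cases "\<exists>u. xs ! i = sstr u")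
    case True
    then obtain u where u: "xs ! i = sstr u" by auto
    have q: "4 \<le> q" "q < 9" using z1 assms(6) u sstr_nth[OF iq(2), of u] by (auto split: if_splits)
    have "t + 2 = 10 * i + (q + 1)" using iq by simp
    then have "concat xs ! (t + 2) = sstr u ! (q + 1)" using zat[OF iq(1), of "q+1"] q u by simp
    also have "\<dots> \<noteq> Sym (cpred cord v w)" using sstr_nth[of "q + 1" u] q by auto
    finally show ?thesis using assms(7) by simp
  next
    case False
    then obtain u w' where uw: "(u, w') \<in> E" "xs ! i = estr cord u w'" using SH_cases[OF xi] by auto
    have q: "even q" "u = v" using z1 assms(6) uw estr_nth[OF iq(2), of cord u w'] by (auto split: if_splits)
    then have q8: "q \<le> 8" using iq(2) by (cases "q = 9") auto
    have t2: "t + 2 = 10 * i + (q + 1)" using iq by simp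
    show ?thesis
    proof (cases "q = 8")
      case True
      have "t + 2 = 10 * i + 9" using t2 True by simp
      then have "concat xs ! (t + 2) = concat xs ! (10 * i + 9)" by (simp only:)
      also have "\<dots> = estr cord u w' ! 9" using zat[OF iq(1), of 9] uw by simp
      finally have "concat xs ! (t + 2) = estr cord u w' ! 9" .
      then have "concat xs ! (t + 2) = Sym w'" using estr_nth[of 9 cord u w'] by simp
      then have w': "w' = cpred cord v w" using assms(7) by simp
      have "t = 10 * i + 7" using iq True by simp
      then have "concat xs ! t = concat xs ! (10 * i + 7)" by (simp only:)
      also have "\<dots> = estr cord u w' ! 7" using zat[OF iq(1), of 7] uw by simp
      finally have "concat xs ! t = estr cord u w' ! 7" .
      then have "concat xs ! t = Sym (cpred cord u w')" using estr_nth[of 7 cord u w'] by simp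
      then have "cpred cord u w' = w'" using assms(5) w' by simp
      then show ?thesis using cp_ne[OF vg uw(1)] by simp
    next
      case False
      then have "q + 1 < 9" "odd (q + 1)" using q q8 by auto
      then have "concat xs ! (t + 2) = Sym (cpred cord u w')"
        using zat[OF iq(1), of "q + 1"] t2 uw estr_nth[of "q + 1" cord u w'] by simp
      then have "cpred cord v w' = cpred cord v w" using assms(7) q by simp
      then have "w' = w" using cp_inj[OF vg _ assms(3)] uw q by simp
      then have "i = k" using xs_inj[OF iq(1) assms(1)] uw q assms(2) by simp
      moreover have "q = 0 \<or> q = 2 \<or> q = 4 \<or> q = 6" using q q8 False by presburger
      ultimately show ?thesis using iq by auto
    qed
  qed
qed

end


context batch begin

lemma zlen: "k < length xs \<Longrightarrow> 10 * k + 10 \<le> length (concat xs)"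
  using lenz by simp

lemma NE:
  assumes "k < length xs" "xs ! k = estr cord u x" "(u, x) \<in> E" "p \<le> 10 * k + 5" "10 * k + 10 \<le> p + m"
  shows "\<not> prev_occ (concat xs) p m"
proof
  assume po: "prev_occ (concat xs) p m"
  let ?z = "concat xs" let ?s = "10 * k" let ?c = "cpred cord u x"
  have "0 < m" using assms by linarith
  then obtain j where j: "j < p" "j + m \<le> length ?z" "p + m \<le> length ?z" "\<forall>r<m. ?z ! (j + r) = ?z ! (p + r)"
    using prev_occD[OF po] by blast
  define t where "t = j + (?s + 5 - p)"
  have hr: "?z ! (t + r) = ?z ! (?s + 5 + r)" if "r < 5" for r
  proof -
    have "?s + 5 - p + r < m" using that assms by linarith
    then have "?z ! (j + (?s + 5 - p + r)) = ?z ! (p + (?s + 5 - p + r))" using j(4) by blast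
    moreover have "j + (?s + 5 - p + r) = t + r" "p + (?s + 5 - p + r) = ?s + 5 + r"
      using assms unfolding t_def by auto
    ultimately show ?thesis by simp
  qed
  have L: "?s + 10 \<le> length ?z" using zlen[OF assms(1)] .
  have v5: "?z ! (?s + 5) = Sym ?c" using per[OF assms(1,2), of "?s + 5"] by simp
  have v6: "?z ! (?s + 6) = Prime u" using per[OF assms(1,2), of "?s + 6"] by simp
  have v7: "?z ! (?s + 7) = Sym ?c" using per[OF assms(1,2), of "?s + 7"] by simp
  have v9: "?z ! (?s + 9) = Sym x" using last9[OF assms(1,2)] .
  have tl: "t < ?s + 5" using j(1) assms unfolding t_def by linarith
  have "t + 1 = ?s \<or> t + 1 = ?s + 2 \<or> t + 1 = ?s + 4 \<or> t + 1 = ?s + 6"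
  proof (rule triple[OF assms(1,2,3)])
    show "t + 2 < length ?z" using tl L by linarith
    show "?z ! t = Sym ?c" using hr[of 0] v5 by simp
    show "?z ! (t + 1) = Prime u" using hr[of 1] v6 by (simp add: ac_simps)
    have "?z ! (t + 2) = ?z ! (?s + 5 + 2)" using hr[of 2] by simp
    also have "?s + 5 + 2 = ?s + 7" by simp
    finally show "?z ! (t + 2) = Sym ?c" by (rule trans[OF _ v7])
  qed
  then have "t + 4 = ?s + 3 \<or> t + 4 = ?s + 5 \<or> t + 4 = ?s + 7" using tl by auto
  then have b: "?s \<le> t + 4" "t + 4 \<le> ?s + 8" "odd (t + 4)" by presburger+
  then have "?z ! (t + 4) = Sym ?c"
    using per[OF assms(1,2), of "t + 4"] by simp
  moreover have "?z ! (t + 4) = Sym x" using hr[of 4] v9 by (simp add: add.assoc)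
  ultimately show False using cp_ne[OF vg assms(3)] by simp
qed

lemma e_end:
  assumes "i < length xs" "xs ! i = estr cord u x" "(u, x) \<in> E"
  shows "lz_boundary (concat xs) (10 * i + 10)"
proof (rule boundary_end[of "10 * i + 5"])
  let ?z = "concat xs" let ?s = "10 * i"
  have L: "?s + 10 \<le> length ?z" using zlen[OF assms(1)] .
  show "10 * i + 5 < length ?z" using L by linarith
  fix p assume p: "lz_boundary ?z p" "p \<le> ?s + 5" "?s + 5 < p + lz_len ?z p"
  define l where "l = lz_len ?z p"
  have pl: "1 \<le> l" "p + l \<le> length ?z" "prev_occ ?z p (l - 1)"
    using lz_len_props[of p ?z] p(2) L unfolding l_def by auto
  have qle: "p + l \<le> ?s + 10"
  proof (rule ccontr)
    assume "\<not> ?thesis"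
    then have "\<not> prev_occ ?z p (l - 1)" using NE[OF assms, of p "l - 1"] p(2) by auto
    then show False using pl by simp
  qed
  have "?s + 10 \<le> p + l"
  proof (cases "?s + 2 \<le> p")
    case True
    have "prev_occ ?z p (?s + 9 - p)"
    proof (rule prev_occI[of "p - 2"])
      show "p - 2 < p" using True by simp
      show "p - 2 + (?s + 9 - p) \<le> length ?z" "p + (?s + 9 - p) \<le> length ?z" using L True p(2) by auto
      show "\<forall>r<?s + 9 - p. ?z ! (p - 2 + r) = ?z ! (p + r)"
      proof (intro allI impI)
        fix r assume r: "r < ?s + 9 - p"
        have "?z ! (p - 2 + r) = (if even (p - 2 + r) then Prime u else Sym (cpred cord u x))"
          using per[OF assms(1,2), of "p - 2 + r"] True r by auto
        moreover have "?z ! (p + r) = (if even (p + r) then Prime u else Sym (cpred cord u x))"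
          using per[OF assms(1,2), of "p + r"] True r by auto
        moreover have "even (p - 2 + r) \<longleftrightarrow> even (p + r)"
        proof -
          have "p + r = (p - 2 + r) + 2" using True by simp
          then show ?thesis by simp
        qed
        ultimately show "?z ! (p - 2 + r) = ?z ! (p + r)" by simp
      qed
    qed
    moreover have "?s + 10 - p - 1 = ?s + 9 - p" by simp
    ultimately have "prev_occ ?z p (?s + 10 - p - 1)" by metis
    then have "?s + 10 - p \<le> l" unfolding l_def using L p(2) by (intro lz_len_ge) auto
    then show ?thesis using p(2) by linarith
  next
    case False
    show ?thesis
    proof (rule ccontr)
      assume nl: "\<not> ?thesis"
      have l5: "?s + 6 \<le> p + l" using p(3) unfolding l_def by simp
      have "0 < l - 1" using l5 False by linarith
      then obtain j where j: "j < p" "j + (l - 1) \<le> length ?z" "\<forall>r<l - 1. ?z ! (j + r) = ?z ! (p + r)"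
        using prev_occD[OF pl(3)] by blast
      define t where "t = j + (?s + 1 - p)"
      have hr: "?z ! (t + r) = ?z ! (?s + 1 + r)" if "r < 3" for r
      proof -
        have "?s + 1 - p + r < l - 1" using that False l5 by linarith
        then have "?z ! (j + (?s + 1 - p + r)) = ?z ! (p + (?s + 1 - p + r))" using j(3) by blast
        moreover have "j + (?s + 1 - p + r) = t + r" "p + (?s + 1 - p + r) = ?s + 1 + r"
          using False unfolding t_def by auto
        ultimately show ?thesis by simp
      qed
      have tl: "t < ?s + 1" using j(1) False unfolding t_def by linarith
      have "t + 1 = ?s \<or> t + 1 = ?s + 2 \<or> t + 1 = ?s + 4 \<or> t + 1 = ?s + 6"
      proof (rule triple[OF assms(1,2,3)])
        show "t + 2 < length ?z" using tl L by linarith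
        show "?z ! t = Sym (cpred cord u x)" using hr[of 0] per[OF assms(1,2), of "?s + 1"] by simp
        show "?z ! (t + 1) = Prime u" using hr[of 1] per[OF assms(1,2), of "?s + 2"] by simp
        have "?z ! (t + 2) = ?z ! (?s + 1 + 2)" using hr[of 2] by simp
        also have "?s + 1 + 2 = ?s + 3" by simp
        finally show "?z ! (t + 2) = Sym (cpred cord u x)"
          by (rule trans) (use per[OF assms(1,2), of "?s + 3"] in simp)
      qed
      then have "t + 1 = ?s" using tl by auto
      then have jp: "j + 2 = p" unfolding t_def using False by linarith
      have "prev_occ ?z p l"
      proof (rule prev_occI[of j])
        show "j < p" by fact
        show "j + l \<le> length ?z" "p + l \<le> length ?z" using jp pl by auto
        show "\<forall>r<l. ?z ! (j + r) = ?z ! (p + r)"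
        proof (intro allI impI)
          fix r assume r: "r < l"
          show "?z ! (j + r) = ?z ! (p + r)"
          proof (cases "r < l - 1")
            case True then show ?thesis using j(3) by blast
          next
            case False
            then have rr: "r = l - 1" using r by simp
            have bb: "?s \<le> j + r" "j + r \<le> ?s + 8" "?s \<le> p + r" "p + r \<le> ?s + 8"
              using rr jp l5 nl pl(1) by linarith+
            have "?z ! (j + r) = (if even (j + r) then Prime u else Sym (cpred cord u x))"
              using per[OF assms(1,2), of "j + r"] bb by simp
            moreover have "?z ! (p + r) = (if even (p + r) then Prime u else Sym (cpred cord u x))"
              using per[OF assms(1,2), of "p + r"] bb by simp
            moreover have "even (j + r) \<longleftrightarrow> even (p + r)"
            proof -
              have "p + r = (j + r) + 2" using jp by simp
              then show ?thesis by simp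
            qed
            ultimately show ?thesis by simp
          qed
        qed
      qed
      then have "l + 1 \<le> l" unfolding l_def using nl L by (intro lz_len_ge) (auto simp: l_def)
      then show False by simp
    qed
  qed
  then show "p + lz_len ?z p = ?s + 10" using qle unfolding l_def by simp
qed

lemma dollar_uniq:
  assumes "i < length xs" "xs ! i = sstr u" "t < length (concat xs)" "concat xs ! t = Dollar u"
  shows "t = 10 * i + 9"
proof -
  obtain i' q where iq: "i' < length xs" "q < 10" "t = 10 * i' + q" using locate assms(3) by blast
  have z: "concat xs ! t = xs ! i' ! q" using zat iq by simp
  have xi: "xs ! i' \<in> set xs" using iq by simp
  show ?thesis
  proof (cases "\<exists>u'. xs ! i' = sstr u'")
    case True
    then obtain u' where u': "xs ! i' = sstr u'" by auto
    have "q = 9" "u' = u" using z assms(4) u' sstr_nth[OF iq(2), of u'] iq(2) by (auto split: if_splits)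
    then have "i' = i" using xs_inj[OF iq(1) assms(1)] u' assms(2) by simp
    then show ?thesis using iq \<open>q = 9\<close> by simp
  next
    case False
    then obtain u' w' where "xs ! i' = estr cord u' w'" using SH_cases[OF xi] by auto
    then show ?thesis using z assms(4) estr_nth[OF iq(2), of cord u' w'] by (auto split: if_splits)
  qed
qed

lemma s_end:
  assumes "i < length xs" "xs ! i = sstr u"
  shows "lz_boundary (concat xs) (10 * i + 10)"
proof (rule boundary_end[of "10 * i + 9"])
  let ?z = "concat xs" let ?s = "10 * i"
  have L: "?s + 10 \<le> length ?z" using zlen[OF assms(1)] .
  show "10 * i + 9 < length ?z" using L by linarith
  fix p assume p: "lz_boundary ?z p" "p \<le> ?s + 9" "?s + 9 < p + lz_len ?z p"
  define l where "l = lz_len ?z p"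
  have pl: "1 \<le> l" "p + l \<le> length ?z" "prev_occ ?z p (l - 1)"
    using lz_len_props[of p ?z] p(2) L unfolding l_def by auto
  have "p + l \<le> ?s + 10"
  proof (rule ccontr)
    assume nl: "\<not> ?thesis"
    then have "0 < l - 1" using p(2) by linarith
    then obtain j where j: "j < p" "j + (l - 1) \<le> length ?z" "\<forall>r<l - 1. ?z ! (j + r) = ?z ! (p + r)"
      using prev_occD[OF pl(3)] by blast
    have "?s + 9 - p < l - 1" using nl p(2) by linarith
    then have e: "?z ! (j + (?s + 9 - p)) = ?z ! (p + (?s + 9 - p))" using j(3) by blast
    have "p + (?s + 9 - p) = ?s + 9" using p(2) by simp
    moreover have "?z ! (?s + 9) = Dollar u" using zat[OF assms(1), of 9] assms(2) sstr_nth[of 9 u] by simp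
    ultimately have "?z ! (j + (?s + 9 - p)) = Dollar u" using e by simp
    then have "j + (?s + 9 - p) = ?s + 9" using dollar_uniq[OF assms] L j(1) p(2) by simp
    then show False using j(1) p(2) by linarith
  qed
  then show "p + lz_len ?z p = ?s + 10" using p(3) unfolding l_def by simp
qed

lemma all_ends: "i < length xs \<Longrightarrow> lz_boundary (concat xs) (10 * i + 10)"
  using SH_cases[of "xs ! i"] e_end s_end by (metis nth_mem)

lemma start_b: "k \<le> length xs \<Longrightarrow> lz_boundary (concat xs) (10 * k)"
proof (cases k)
  case 0 then show ?thesis by (simp add: lz_boundary.start)
next
  case (Suc k')
  assume "k \<le> length xs"
  then have "k' < length xs" using Suc by simp
  then show ?thesis using all_ends[of k'] Suc by (simp add: ac_simps)
qed

end

theorem lemma7: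
  fixes V :: "'v set" and E :: "('v \<times> 'v) set" and cord :: "'v \<Rightarrow> 'v list"
    and xs :: "'v sym list list" and k :: nat and v w :: 'v
  assumes "valid_graph V E cord"
    and "is_batch V E cord xs"
    and "(v, w) \<in> E"
    and "k < length xs" and "xs ! k = estr cord v w"
  shows "let X = concat xs; a = length (concat (take k xs)); b = a + length (estr cord v w) in
     (0 < k \<and> xs ! (k - 1) = estr cord v (cpred cord v w) \<longrightarrow> union_of_phrases X a b 1) \<and>
     (0 < k \<and> xs ! (k - 1) = sstr v \<longrightarrow> union_of_phrases X a b 2) \<and>
     (\<not> (0 < k \<and> (xs ! (k - 1) = estr cord v (cpred cord v w) \<or> xs ! (k - 1) = sstr v)) \<longrightarrow>
        (\<exists>n\<ge>2. union_of_phrases X a b n))"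
proof -
  interpret batch V E cord xs using assms(1,2) by unfold_locales
  let ?z = "concat xs" let ?y = "cpred cord v w"
  define a where "a = 10 * k"
  have a_eq: "length (concat (take k xs)) = a" using concat10_take[OF len10] assms(4) a_def by simp
  have L: "a + 10 \<le> length ?z" using zlen[OF assms(4)] a_def by simp
  have ba: "lz_boundary ?z a" using start_b assms(4) a_def by simp
  have bb: "lz_boundary ?z (a + 10)" using all_ends[OF assms(4)] a_def by simp
  have NEk: "\<not> prev_occ ?z p m" if "p \<le> a + 5" "a + 10 \<le> p + m" for p m
    using NE[OF assms(4,5,3)] that a_def by simp
  have pera: "?z ! t = (if even t then Prime v else Sym ?y)" if "a \<le> t" "t \<le> a + 8" for t
    using per[OF assms(4,5)] that a_def by simp
  have evena: "even a" unfolding a_def by simp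
  have la: "1 \<le> lz_len ?z a" "a + lz_len ?z a \<le> length ?z"
    using lz_len_props[of a ?z] L by auto
  have gap: "a + lz_len ?z a \<le> i" if "lz_boundary ?z i" "a < i" for i
    using boundary_gap[OF ba _ that] L by simp
  have prevpos: "?z ! (a - 2) = xs ! (k - 1) ! 8 \<and> ?z ! (a - 1) = xs ! (k - 1) ! 9" if "0 < k"
  proof -
    have "k - 1 < length xs" using assms(4) by simp
    moreover have "a - 2 = 10 * (k - 1) + 8" "a - 1 = 10 * (k - 1) + 9" using that a_def by auto
    ultimately show ?thesis using zat[of "k - 1"] by simp
  qed
  have key: "0 < k \<and> xs ! (k - 1) = estr cord v ?y" if po: "prev_occ ?z a 9"
  proof -
    obtain j where j: "j < a" "j + 9 \<le> length ?z" "\<forall>r<9. ?z ! (j + r) = ?z ! (a + r)"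
      using prev_occD[OF po] by auto
    have "j + 1 + 1 = a \<or> j + 1 + 1 = a + 2 \<or> j + 1 + 1 = a + 4 \<or> j + 1 + 1 = a + 6"
      unfolding a_def
    proof (rule triple[OF assms(4,5,3)])
      show "j + 1 + 2 < length ?z" using j L by linarith
      show "?z ! (j + 1) = Sym ?y" using j(3)[rule_format, of 1] pera[of "a + 1"] evena by simp
      show "?z ! (j + 1 + 1) = Prime v" using j(3)[rule_format, of 2] pera[of "a + 2"] evena
        by (simp add: add.assoc)
      have "?z ! (j + 3) = Sym ?y" using j(3)[rule_format, of 3] pera[of "a + 3"] evena by simp
        moreover have "j + 1 + 2 = j + 3" by simp
        ultimately show "?z ! (j + 1 + 2) = Sym ?y" by metis
    qed
    then have ja: "j + 2 = a" using j(1) by auto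
    then have k0: "0 < k" unfolding a_def by (cases k) auto
    have "a - 2 = j" using ja by simp
    then have "?z ! (a - 2) = Prime v" using j(3)[rule_format, of 0] pera[of a] evena by simp
    moreover have "?z ! (a - 1) = Sym ?y"
    proof -
      have "a - 1 = j + 1" using ja by simp
      then show ?thesis using j(3)[rule_format, of 1] pera[of "a + 1"] evena by simp
    qed
    ultimately have p8: "xs ! (k - 1) ! 8 = Prime v" and p9: "xs ! (k - 1) ! 9 = Sym ?y"
      using prevpos[OF k0] by auto
    have xi: "xs ! (k - 1) \<in> set xs" using assms(4) by simp
    show ?thesis
    proof (cases "\<exists>u. xs ! (k - 1) = sstr u")
      case True
      then obtain u where u: "xs ! (k - 1) = sstr u" by auto
      have "sstr u ! 9 = Dollar u" using sstr_nth[of 9 u] by simp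
      then show ?thesis using p9 u by simp
    next
      case False
      then obtain u w' where uw: "xs ! (k - 1) = estr cord u w'" using SH_cases[OF xi] by auto
      then show ?thesis using p8 p9 estr_nth[of 8 cord u w'] estr_nth[of 9 cord u w'] k0 by simp
    qed
  qed
  show ?thesis unfolding Let_def a_eq len_estr union_of_phrases_def
  proof (intro conjI; intro impI)
    assume c1: "0 < k \<and> xs ! (k - 1) = estr cord v ?y"
    have "prev_occ ?z a 9"
    proof (rule prev_occI[of "a - 2"])
      show "a - 2 < a" using c1 a_def by simp
      show "a - 2 + 9 \<le> length ?z" "a + 9 \<le> length ?z" using L by auto
      show "\<forall>r<9. ?z ! (a - 2 + r) = ?z ! (a + r)"
      proof (intro allI impI)
        fix r :: nat assume r: "r < 9"
        have a2: "2 \<le> a" using c1 a_def by simp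
        consider "r = 0" | "r = 1" | "2 \<le> r" by linarith
        then show "?z ! (a - 2 + r) = ?z ! (a + r)"
        proof cases
          case 1
          then show ?thesis using prevpos c1 estr_nth[of 8 cord v ?y] pera[of a] evena by simp
        next
          case 2
          have "a - 2 + r = a - 1" using 2 a2 by simp
          then show ?thesis using 2 prevpos c1 estr_nth[of 9 cord v ?y] pera[of "a + 1"] evena by simp
        next
          case 3
          have "a - 2 + r = a + (r - 2)" using 3 a2 by simp
          moreover have "even (a + (r - 2)) \<longleftrightarrow> even (a + r)" using 3 by (simp add: even_add)
          ultimately show ?thesis using pera[of "a + (r - 2)"] pera[of "a + r"] r by simp
        qed
      qed
    qed
    then have "10 \<le> lz_len ?z a" using L by (intro lz_len_ge) auto
    moreover have "lz_len ?z a \<le> 10" using NEk[of a 10] L by (intro lz_len_le) auto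
    ultimately have l10: "lz_len ?z a = 10" by simp
    have "{i. lz_boundary ?z i \<and> a \<le> i \<and> i < a + 10} = {a}"
      using gap l10 ba by fastforce
    then show "lz_boundary ?z a \<and> lz_boundary ?z (a + 10) \<and>
        card {i. lz_boundary ?z i \<and> a \<le> i \<and> i < a + 10} = 1" using ba bb by simp
  next
    assume c2: "0 < k \<and> xs ! (k - 1) = sstr v"
    define L1 where "L1 = lz_len ?z a"
    have a2: "2 \<le> a" using c2 a_def by simp
    have "prev_occ ?z a 1"
      by (rule prev_occI[of "a - 2"]) (use a2 L prevpos c2 sstr_nth[of 8 v] pera[of a] evena in auto)
    then have L1a: "2 \<le> L1" unfolding L1_def using L by (intro lz_len_ge) auto
    have "\<not> prev_occ ?z a 4"
    proof
      assume po: "prev_occ ?z a 4"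
      obtain j where j: "j < a" "\<forall>r<4. ?z ! (j + r) = ?z ! (a + r)"
        using prev_occD[OF po] by auto
      have "j + 1 + 1 = a \<or> j + 1 + 1 = a + 2 \<or> j + 1 + 1 = a + 4 \<or> j + 1 + 1 = a + 6"
        unfolding a_def
      proof (rule triple[OF assms(4,5,3)])
        show "j + 1 + 2 < length ?z" using j L by linarith
        show "?z ! (j + 1) = Sym ?y" using j(2)[rule_format, of 1] pera[of "a + 1"] evena by simp
        show "?z ! (j + 1 + 1) = Prime v" using j(2)[rule_format, of 2] pera[of "a + 2"] evena
          by (simp add: add.assoc)
        have "?z ! (j + 3) = Sym ?y" using j(2)[rule_format, of 3] pera[of "a + 3"] evena by simp
        moreover have "j + 1 + 2 = j + 3" by simp
        ultimately show "?z ! (j + 1 + 2) = Sym ?y" by metis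
      qed
      then have ja: "j + 2 = a" using j(1) by auto
      then have "a - 1 = j + 1" by simp
      then have "?z ! (a - 1) = Sym ?y" using j(2)[rule_format, of 1] pera[of "a + 1"] evena by simp
      then show False using prevpos c2 sstr_nth[of 9 v] by simp
    qed
    then have L1b: "L1 \<le> 4" unfolding L1_def using L by (intro lz_len_le) auto
    define p2 where "p2 = a + L1"
    have bp2: "lz_boundary ?z p2" unfolding p2_def L1_def using ba L by (intro lz_boundary.step) auto
    have "prev_occ ?z p2 (a + 9 - p2)"
    proof (rule prev_occI[of "p2 - 2"])
      show "p2 - 2 < p2" using L1a p2_def by simp
      show "p2 - 2 + (a + 9 - p2) \<le> length ?z" "p2 + (a + 9 - p2) \<le> length ?z"
        using L L1a L1b p2_def by auto
      show "\<forall>r<a + 9 - p2. ?z ! (p2 - 2 + r) = ?z ! (p2 + r)"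
      proof (intro allI impI)
        fix r assume r: "r < a + 9 - p2"
        have "p2 + r = (p2 - 2 + r) + 2" using L1a p2_def by simp
        then have "even (p2 - 2 + r) \<longleftrightarrow> even (p2 + r)" by simp
        then show "?z ! (p2 - 2 + r) = ?z ! (p2 + r)"
          using pera[of "p2 - 2 + r"] pera[of "p2 + r"] r L1a L1b p2_def by simp
      qed
    qed
    moreover have "a + 10 - p2 - 1 = a + 9 - p2" by simp
    ultimately have "prev_occ ?z p2 (a + 10 - p2 - 1)" by metis
    then have "a + 10 - p2 \<le> lz_len ?z p2" using L L1b p2_def by (intro lz_len_ge) auto
    moreover have "lz_len ?z p2 \<le> a + 10 - p2"
      using NEk[of p2 "a + 10 - p2"] L L1b p2_def by (intro lz_len_le) auto
    ultimately have lp2: "p2 + lz_len ?z p2 = a + 10" using L1b p2_def by simp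
    have gap2: "a + 10 \<le> i" if "lz_boundary ?z i" "p2 < i" for i
      using boundary_gap[OF bp2 _ that] L L1b p2_def lp2 by simp
    have "{i. lz_boundary ?z i \<and> a \<le> i \<and> i < a + 10} = {a, p2}"
    proof
      show "{i. lz_boundary ?z i \<and> a \<le> i \<and> i < a + 10} \<subseteq> {a, p2}"
      proof
        fix i assume i: "i \<in> {i. lz_boundary ?z i \<and> a \<le> i \<and> i < a + 10}"
        show "i \<in> {a, p2}"
        proof (rule ccontr)
          assume "i \<notin> {a, p2}"
          then have "a < i" "i \<noteq> p2" using i by auto
          then have "p2 < i" using gap[of i] i unfolding p2_def L1_def by auto
          then show False using gap2[of i] i by auto
        qed
      qed
      show "{a, p2} \<subseteq> {i. lz_boundary ?z i \<and> a \<le> i \<and> i < a + 10}"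
        using ba bp2 L1b p2_def by auto
    qed
    moreover have "a \<noteq> p2" using L1a p2_def by simp
    ultimately show "lz_boundary ?z a \<and> lz_boundary ?z (a + 10) \<and>
        card {i. lz_boundary ?z i \<and> a \<le> i \<and> i < a + 10} = 2" using ba bb by simp
  next
    assume c3: "\<not> (0 < k \<and> (xs ! (k - 1) = estr cord v ?y \<or> xs ! (k - 1) = sstr v))"
    have "\<not> prev_occ ?z a 9" using key c3 by blast
    then have l9: "lz_len ?z a \<le> 9" using L by (intro lz_len_le) auto
    let ?S = "{i. lz_boundary ?z i \<and> a \<le> i \<and> i < a + 10}"
    have fin: "finite ?S" by (rule finite_subset[of _ "{a..<a + 10}"]) auto
    have sub: "{a, a + lz_len ?z a} \<subseteq> ?S"
      using ba l9 la L by (auto intro: lz_boundary.step)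
    have "card {a, a + lz_len ?z a} = 2" using la by simp
    then have "2 \<le> card ?S" using card_mono[OF fin sub] by simp
    then show "\<exists>n\<ge>2. lz_boundary ?z a \<and> lz_boundary ?z (a + 10) \<and> card ?S = n" using ba bb by auto
  qed
qed

end
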